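(* Consider a Zosin–Khuller type instance built from $H=(\mathcal{A}\uplus\mathcal{B},E_H)$, $K$, $\{M_t\}_{t\in K}$ with parameters $d,d',k,s$ as in the context. Let $\alpha\ge 1$ be a real number. Suppose that for every $u\in\mathcal{A}$ there is a set $J_u\subseteq K$ with $|J_u|\le d/\alpha$ such that for every edge $\{u,v\}\in E_H$ (with $v\in\mathcal{B}$) we have $|K_v\setminus J_u|\le d'/\alpha$. Then every subgraph of $G$ that contains a directed path from $r$ to every terminal $t\in K$ has total cost at least $\alpha|\mathcal{B}|/s$.
   Context: A Zosin–Khuller type instance is specified by: (P1) a bipartite graph $H=(\mathcal{A}\uplus\mathcal{B},E_H)$ with $|\mathcal{A}|\le|\mathcal{B}|$, every vertex of $\mathcal{A}$ of degree $d$ and every vertex of $\mathcal{B}$ of degree $d'$; (P2) a set $K$ of $k$ terminals and a partition $\{M_t\}_{t\in K}$ of $E_H$ into $k$ matchings, each of size $s$ (so $sk=d|\mathcal{A}|=d'|\mathcal{B}|=|E_H|$; edges in $M_t$ are said to have color $t$); (P3) for $v\in\mathcal{B}$, $K_v=\{t\in K: v \text{ is matched in } M_t\}$, so $|K_v|=d'$. The DST instance is the directed graph $G$ with vertex set $\{r\}\uplus\mathcal{A}\uplus\mathcal{B}\uplus\mathcal{B}'\uplus K$, where $\mathcal{B}'$ is a disjoint copy of $\mathcal{B}$ via a bijection $\pi:\mathcal{B}\to\mathcal{B}'$, and edges: $E_1=\{(r,u):u\in\mathcal{A}\}$ each of cost $|\mathcal{B}|/|\mathcal{A}|$; $E_2=\{(u,v):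 \{u,v\}\in E_H, u\in\mathcal{A}, v\in\mathcal{B}\}$ each of cost $0$; $E_3=\{(v,\pi(v)):v\in\mathcal{B}\}$ each of cost $1$; $E_4=\{(\pi(v),t): v\in\mathcal{B}, t\in K_v\}$ each of cost $0$. The root is $r$ and the terminal set is $K$. *)

theory Defs
  imports Main "HOL.Real"
begin

text \<open>Vertices of the DST instance G: the root r, copies of A, B, B' (via pi = VBp) and K.\<close>
datatype ('a, 'b, 't) zk_vertex = Root | VA 'a | VB 'b | VBp 'b | VT 't

definition is_matching :: "('a \<times> 'b) set \<Rightarrow> bool" where
  "is_matching M \<longleftrightarrow> (\<forall>(u, v) \<in> M. \<forall>(u', v') \<in> M. (u = u' \<longleftrightarrow> v = v'))"

definition zk_instance ::
  "'a set \<Rightarrow> 'b set \<Rightarrow> ('a \<times> 'b) set \<Rightarrow> nat \<Rightarrow> nat \<Rightarrow> 't set \<Rightarrow> nat \<Rightarrow>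
   ('t \<Rightarrow> ('a \<times> 'b) set) \<Rightarrow> nat \<Rightarrow> bool" where
  "zk_instance A B EH d d' K k M s \<longleftrightarrow>
     finite A \<and> finite B \<and> card A \<le> card B \<and> EH \<subseteq> A \<times> B \<and>
     (\<forall>u \<in> A. card {v. (u, v) \<in> EH} = d) \<and>
     (\<forall>v \<in> B. card {u. (u, v) \<in> EH} = d') \<and>
     finite K \<and> card K = k \<and>
     (\<forall>t \<in> K. M t \<subseteq> EH \<and> is_matching (M t) \<and> card (M t) = s) \<and>
     (\<forall>t \<in> K. \<forall>t' \<in> K. t \<noteq> t' \<longrightarrow> M t \<inter> M t' = {}) \<and>
     (\<Union>t \<in> K. M t) = EH"

definition zk_Kv :: "'t set \<Rightarrow> ('t \<Rightarrow> ('a \<times> 'b) set) \<Rightarrow> 'b \<Rightarrow> 't set" where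
  "zk_Kv K M v = {t \<in> K. \<exists>u. (u, v) \<in> M t}"

definition zk_edges ::
  "'a set \<Rightarrow> 'b set \<Rightarrow> ('a \<times> 'b) set \<Rightarrow> 't set \<Rightarrow> ('t \<Rightarrow> ('a \<times> 'b) set) \<Rightarrow>
   (('a, 'b, 't) zk_vertex \<times> ('a, 'b, 't) zk_vertex) set" where
  "zk_edges A B EH K M =
     {(Root, VA u) | u. u \<in> A}
   \<union> {(VA u, VB v) | u v. (u, v) \<in> EH \<and> u \<in> A \<and> v \<in> B}
   \<union> {(VB v, VBp v) | v. v \<in> B}
   \<union> {(VBp v, VT t) | v t. v \<in> B \<and> t \<in> zk_Kv K M v}"

fun zk_cost :: "'a set \<Rightarrow> 'b set \<Rightarrow>
    ('a, 'b, 't) zk_vertex \<times> ('a, 'b, 't) zk_vertex \<Rightarrow> real" where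
  "zk_cost A B (Root, VA u) = real (card B) / real (card A)"
| "zk_cost A B (VB v, VBp v') = 1"
| "zk_cost A B _ = 0"

end

theory Submission
  imports Defs
begin

lemma into_VT: "(y, VT t) \<in> zk_edges A B EH K M \<Longrightarrow> \<exists>v. y = VBp v \<and> v \<in> B \<and> t \<in> zk_Kv K M v"
  by (auto simp: zk_edges_def)
lemma into_VBp: "(y, VBp v) \<in> zk_edges A B EH K M \<Longrightarrow> y = VB v \<and> v \<in> B"
  by (auto simp: zk_edges_def)
lemma into_VB: "(y, VB v) \<in> zk_edges A B EH K M \<Longrightarrow> \<exists>u. y = VA u \<and> u \<in> A \<and> (u, v) \<in> EH"
  by (auto simp: zk_edges_def)
lemma into_VA: "(y, VA u) \<in> zk_edges A B EH K M \<Longrightarrow> y = Root \<and> u \<in> A"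
  by (auto simp: zk_edges_def)

lemma step_back:
  assumes "(Root, z) \<in> F\<^sup>+"
  obtains y where "(Root, y) \<in> F\<^sup>*" "(y, z) \<in> F"
  using tranclD2[OF assms] by blast

lemma to_trancl:
  assumes "(Root, y) \<in> F\<^sup>*" "y \<noteq> Root"
  shows "(Root, y) \<in> F\<^sup>+"
  using assms by (simp add: rtrancl_eq_or_trancl)

lemma path_struct:
  assumes sub: "F \<subseteq> zk_edges A B EH K M" and p: "(Root, VT t) \<in> F\<^sup>+"
  shows "\<exists>u v. (Root, VA u) \<in> F \<and> (VA u, VB v) \<in> F \<and> (VB v, VBp v) \<in> F \<and> (VBp v, VT t) \<in> F"
proof -
  obtain y where y1: "(Root, y) \<in> F\<^sup>*" "(y, VT t) \<in> F" using step_back[OF p] .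
  have "(y, VT t) \<in> zk_edges A B EH K M" using y1(2) sub by blast
  then obtain v where yv: "y = VBp v" using into_VT by metis
  have "(Root, VBp v) \<in> F\<^sup>+" using to_trancl[OF y1(1)] yv by simp
  then obtain y2 where y2: "(Root, y2) \<in> F\<^sup>*" "(y2, VBp v) \<in> F" by (rule step_back)
  have "(y2, VBp v) \<in> zk_edges A B EH K M" using y2(2) sub by blast
  then have y2v: "y2 = VB v" using into_VBp by metis
  have "(Root, VB v) \<in> F\<^sup>+" using to_trancl[OF y2(1)] y2v by simp
  then obtain y3 where y3: "(Root, y3) \<in> F\<^sup>*" "(y3, VB v) \<in> F" by (rule step_back)
  have "(y3, VB v) \<in> zk_edges A B EH K M" using y3(2) sub by blast
  then obtain u where y3u: "y3 = VA u" using into_VB by metis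
  have "(Root, VA u) \<in> F\<^sup>+" using to_trancl[OF y3(1)] y3u by simp
  then obtain y4 where y4: "(Root, y4) \<in> F\<^sup>*" "(y4, VA u) \<in> F" by (rule step_back)
  have "(y4, VA u) \<in> zk_edges A B EH K M" using y4(2) sub by blast
  then have "y4 = Root" using into_VA by metis
  then have "(Root, VA u) \<in> F \<and> (VA u, VB v) \<in> F \<and> (VB v, VBp v) \<in> F \<and> (VBp v, VT t) \<in> F"
    using y1(2) yv y2(2) y2v y3(2) y3u y4(2) by simp
  then show ?thesis by blast
qed

lemma cost_nonneg: "zk_cost A B e \<ge> 0"
  by (cases "(A, B, e)" rule: zk_cost.cases) auto

lemma final_arith:
  fixes a b d d' k s cA cB :: real and \<alpha> :: real
  assumes "\<alpha> * k \<le> a * d + b * d'" "s * k = d * cA" "d * cA = d' * cB"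
    "s > 0" "d > 0" "d' > 0" "cA > 0" "cB > 0"
  shows "\<alpha> * cB / s \<le> a * cB / cA + b"
proof -
  have hB: "cB = s * k / d'" using assms by (simp add: field_simps)
  have hA: "cA = s * k / d" using assms by (simp add: field_simps)
  have kp: "k > 0" using assms hB by (metis divide_pos_pos mult_pos_pos zero_less_mult_pos zero_less_divide_iff)
  have l: "\<alpha> * cB / s = \<alpha> * k / d'"
  proof -
    have "\<alpha> * cB / s = \<alpha> * (s * k / d') / s" by (subst hB) (rule refl)
    also have "\<dots> = \<alpha> * k / d'" using assms(4) by simp
    finally show ?thesis .
  qed
  have r: "a * cB / cA = a * d / d'"
  proof -
    have "a * cB / cA = a * (s * k / d') / (s * k / d)" by (subst hB, subst hA) (rule refl)
    also have "\<dots> = a * d / d'" using assms(4,5,6) kp by (simp add: field_simps)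
    finally show ?thesis .
  qed
  have "\<alpha> * k / d' \<le> (a * d + b * d') / d'" using assms by (simp add: divide_right_mono)
  also have "\<dots> = a * d / d' + b" using assms by (simp add: field_simps)
  finally show ?thesis using l r by simp
qed

theorem lemma3p1:
  fixes A :: "'a set" and B :: "'b set" and EH :: "('a \<times> 'b) set"
    and K :: "'t set" and M :: "'t \<Rightarrow> ('a \<times> 'b) set"
    and d d' k s :: nat and \<alpha> :: real
    and F :: "(('a, 'b, 't) zk_vertex \<times> ('a, 'b, 't) zk_vertex) set"
  assumes inst: "zk_instance A B EH d d' K k M s"
    and K_ne: "K \<noteq> {}"
    and alpha: "\<alpha> \<ge> 1"
    and J: "\<forall>u \<in> A. \<exists>J \<subseteq> K. real (card J) \<le> real d / \<alpha> \<and>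
              (\<forall>v. (u, v) \<in> EH \<longrightarrow> real (card (zk_Kv K M v - J)) \<le> real d' / \<alpha>)"
    and sub: "F \<subseteq> zk_edges A B EH K M"
    and conn: "\<forall>t \<in> K. (Root, VT t) \<in> F\<^sup>+"
  shows "(\<Sum>e \<in> F. zk_cost A B e) \<ge> \<alpha> * real (card B) / real s"
proof -
  note I = inst[unfolded zk_instance_def]
  have fA: "finite A" and fB: "finite B" and fK: "finite K" and EHs: "EH \<subseteq> A \<times> B"
    and cK: "card K = k" using I by auto
  have fEH: "finite EH" using EHs fA fB finite_subset by blast
  obtain Jf where Jf: "\<forall>u\<in>A. Jf u \<subseteq> K \<and> real (card (Jf u)) \<le> real d / \<alpha> \<and>
      (\<forall>v. (u, v) \<in> EH \<longrightarrow> real (card (zk_Kv K M v - Jf u)) \<le> real d' / \<alpha>)"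
    using bchoice[OF J] by blast
  define A' where "A' = {u. (Root, VA u) \<in> F}"
  define B' where "B' = {v. (VB v, VBp v) \<in> F}"
  have A'A: "A' \<subseteq> A" unfolding A'_def using sub by (auto simp: zk_edges_def)
  have B'B: "B' \<subseteq> B" unfolding B'_def using sub by (auto simp: zk_edges_def)
  have fA': "finite A'" using A'A fA finite_subset by blast
  have fB': "finite B'" using B'B fB finite_subset by blast
  define B'' where "B'' = {v \<in> B'. \<exists>u. (Root, VA u) \<in> F \<and> (VA u, VB v) \<in> F}"
  define u0 where "u0 v = (SOME u. (Root, VA u) \<in> F \<and> (VA u, VB v) \<in> F)" for v
  have u0: "(Root, VA (u0 v)) \<in> F \<and> (VA (u0 v), VB v) \<in> F" if "v \<in> B''" for v
    using that unfolding B''_def u0_def by (metis (mono_tags, lifting) mem_Collect_eq someI_ex)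
  have u0A: "u0 v \<in> A'" "u0 v \<in> A" "(u0 v, v) \<in> EH" if "v \<in> B''" for v
    using u0[OF that] sub unfolding A'_def by (auto simp: zk_edges_def)
  have fB'': "finite B''" using fB' unfolding B''_def by auto
  have B''B': "B'' \<subseteq> B'" unfolding B''_def by auto
  define S where "S = (\<Union>u\<in>A'. Jf u) \<union> (\<Union>v\<in>B''. zk_Kv K M v - Jf (u0 v))"
  have KS: "K \<subseteq> S"
  proof
    fix t assume t: "t \<in> K"
    then obtain u v where uv: "(Root, VA u) \<in> F" "(VA u, VB v) \<in> F" "(VB v, VBp v) \<in> F" "(VBp v, VT t) \<in> F"
      using path_struct[OF sub conn[rule_format, OF t]] by blast
    have vB'': "v \<in> B''" using uv unfolding B''_def B'_def by blast
    have "(VBp v, VT t) \<in> zk_edges A B EH K M" using uv(4) sub by blast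
    then have tK: "t \<in> zk_Kv K M v" by (auto simp: zk_edges_def)
    show "t \<in> S"
    proof (cases "t \<in> Jf (u0 v)")
      case True then show ?thesis using u0A[OF vB''] unfolding S_def by blast
    next
      case False then show ?thesis using tK vB'' unfolding S_def by blast
    qed
  qed
  have fS: "finite S" unfolding S_def
  proof (intro finite_UnI finite_UN_I)
    show "finite (Jf u)" if "u \<in> A'" for u using that Jf A'A fK finite_subset by blast
    show "finite (zk_Kv K M v - Jf (u0 v))" for v using fK by (simp add: zk_Kv_def)
  qed (use fA' fB'' in auto)
  have "real k \<le> real (card S)" using card_mono[OF fS KS] cK by simp
  also have "card S \<le> card (\<Union>u\<in>A'. Jf u) + card (\<Union>v\<in>B''. zk_Kv K M v - Jf (u0 v))"
    unfolding S_def by (rule card_Un_le)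
  also have "card (\<Union>u\<in>A'. Jf u) \<le> (\<Sum>u\<in>A'. card (Jf u))" by (rule card_UN_le[OF fA'])
  also have "card (\<Union>v\<in>B''. zk_Kv K M v - Jf (u0 v)) \<le> (\<Sum>v\<in>B''. card (zk_Kv K M v - Jf (u0 v)))"
    by (rule card_UN_le[OF fB''])
  finally have k1: "real k \<le> (\<Sum>u\<in>A'. real (card (Jf u))) + (\<Sum>v\<in>B''. real (card (zk_Kv K M v - Jf (u0 v))))"
    by simp
  have s1: "(\<Sum>u\<in>A'. real (card (Jf u))) \<le> (\<Sum>u\<in>A'. real d / \<alpha>)"
    by (rule sum_mono) (use Jf A'A in blast)
  have s2: "(\<Sum>v\<in>B''. real (card (zk_Kv K M v - Jf (u0 v)))) \<le> (\<Sum>v\<in>B''. real d' / \<alpha>)"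
    by (rule sum_mono) (use Jf u0A in blast)
  have cB'': "card B'' \<le> card B'" using card_mono[OF fB' B''B'] .
  have "real k \<le> real (card A') * (real d / \<alpha>) + real (card B'') * (real d' / \<alpha>)"
    using k1 s1 s2 by simp
  also have "\<dots> \<le> real (card A') * (real d / \<alpha>) + real (card B') * (real d' / \<alpha>)"
    using cB'' alpha by (intro add_left_mono mult_right_mono) auto
  finally have "real k \<le> (real (card A') * real d + real (card B') * real d') / \<alpha>"
    by (simp add: add_divide_distrib)
  then have kbound: "\<alpha> * real k \<le> real (card A') * real d + real (card B') * real d'"
    using alpha by (simp add: field_simps)
  define F1 :: "(('a, 'b, 't) zk_vertex \<times> ('a, 'b, 't) zk_vertex) set"
    where "F1 = (\<lambda>u. (Root, VA u)) ` A'"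
  define F3 :: "(('a, 'b, 't) zk_vertex \<times> ('a, 'b, 't) zk_vertex) set"
    where "F3 = (\<lambda>v. (VB v, VBp v)) ` B'"
  have F1F: "F1 \<subseteq> F" "F3 \<subseteq> F" unfolding F1_def F3_def A'_def B'_def by auto
  have fedges: "finite (zk_edges A B EH K M)"
  proof -
    have "zk_edges A B EH K M \<subseteq> ((\<lambda>u. (Root, VA u)) ` A) \<union> ((\<lambda>(u,v). (VA u, VB v)) ` EH)
      \<union> ((\<lambda>v. (VB v, VBp v)) ` B) \<union> ((\<lambda>(v,t). (VBp v, VT t)) ` (B \<times> K))"
      by (auto simp: zk_edges_def zk_Kv_def image_iff)
    then show ?thesis using fA fB fK fEH finite_subset by blast
  qed
  have fF: "finite F" using sub fedges finite_subset by blast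
  have disj: "F1 \<inter> F3 = {}" unfolding F1_def F3_def by auto
  have "(\<Sum>e\<in>F1 \<union> F3. zk_cost A B e) \<le> (\<Sum>e\<in>F. zk_cost A B e)"
    using F1F fF cost_nonneg by (intro sum_mono2) auto
  moreover have "(\<Sum>e\<in>F1 \<union> F3. zk_cost A B e) = (\<Sum>e\<in>F1. zk_cost A B e) + (\<Sum>e\<in>F3. zk_cost A B e)"
    using disj fF F1F by (intro sum.union_disjoint) (auto intro: finite_subset)
  moreover have "(\<Sum>e\<in>F1. zk_cost A B e) = real (card A') * (real (card B) / real (card A))"
    unfolding F1_def by (subst sum.reindex) (auto simp: inj_on_def)
  moreover have "(\<Sum>e\<in>F3. zk_cost A B e) = real (card B')"
    unfolding F3_def by (subst sum.reindex) (auto simp: inj_on_def)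
  ultimately have cost: "real (card A') * real (card B) / real (card A) + real (card B') \<le> (\<Sum>e\<in>F. zk_cost A B e)"
    by simp
  have cEH1: "card EH = d * card A"
  proof -
    have e: "EH = Sigma A (\<lambda>u. {v. (u, v) \<in> EH})" using EHs by auto
    have fin1: "finite {v. (u, v) \<in> EH}" for u
      using finite_imageI[OF fEH, of snd] by (rule finite_subset[rotated]) force
    have h: "card (Sigma A (\<lambda>u. {v. (u, v) \<in> EH})) = (\<Sum>u\<in>A. card {v. (u, v) \<in> EH})"
      using fA fin1 by (intro card_SigmaI) auto
    have "card EH = (\<Sum>u\<in>A. card {v. (u, v) \<in> EH})"
      using h[folded e] .
    also have "\<dots> = (\<Sum>u\<in>A. d)" using I by (intro sum.cong) auto
    finally show ?thesis by simp
  qed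
  have cEH2: "card EH = d' * card B"
  proof -
    have e: "prod.swap ` EH = Sigma B (\<lambda>v. {u. (u, v) \<in> EH})" using EHs by (auto simp: image_iff intro!: bexI[where x="(b, a)" for a b])
    have "card EH = card (prod.swap ` EH)" by (simp add: card_image)
    also have "\<dots> = (\<Sum>v\<in>B. card {u. (u, v) \<in> EH})"
    proof -
      have fin2: "finite {u. (u, v) \<in> EH}" for v
        using finite_imageI[OF fEH, of fst] by (rule finite_subset[rotated]) force
      show ?thesis unfolding e using fB fin2 by (intro card_SigmaI) auto
    qed
    also have "\<dots> = (\<Sum>v\<in>B. d')" using I by (intro sum.cong) auto
    finally show ?thesis by simp
  qed
  have cEH3: "card EH = s * k"
  proof -
    have "card EH = card (\<Union>t\<in>K. M t)" using I by simp
    also have "\<dots> = (\<Sum>t\<in>K. card (M t))"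
      using I fK fEH by (intro card_UN_disjoint) (auto intro: finite_subset)
    also have "\<dots> = (\<Sum>t\<in>K. s)" using I by (intro sum.cong) auto
    finally show ?thesis using cK by simp
  qed
  show ?thesis
  proof (cases "s = 0")
    case True
    have "0 \<le> (\<Sum>e\<in>F. zk_cost A B e)" using cost_nonneg by (intro sum_nonneg) auto
    then show ?thesis using True by simp
  next
    case False
    have kpos: "k > 0" using cK K_ne fK card_gt_0_iff by blast
    have sk: "s * k > 0" using False kpos by simp
    have eq1: "d * card A = s * k" using cEH1 cEH3 by simp
    have eq2: "d' * card B = s * k" using cEH2 cEH3 by simp
    have q1: "d * card A > 0" using sk by (simp only: eq1)
    have q2: "d' * card B > 0" using sk by (simp only: eq2)
    have p: "d > 0" "card A > 0" "d' > 0" "card B > 0"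
      using q1 q2 by (simp_all add: zero_less_mult_iff)
    have r1: "real s * real k = real d * real (card A)" using cEH1 cEH3 by (metis of_nat_mult)
    have r2: "real d * real (card A) = real d' * real (card B)" using cEH1 cEH2 by (metis of_nat_mult)
    have "\<alpha> * real (card B) / real s \<le> real (card A') * real (card B) / real (card A) + real (card B')"
      by (rule final_arith[OF kbound r1 r2]) (use False p in auto)
    then show ?thesis using cost by linarith
  qed
qed

end
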